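(* Let $\mathcal{T} = \{T_1, \ldots, T_t\}$ be a set of unrooted binary phylogenetic trees on a common leaf set $X$, let $\mathcal{Q}$ be the set of quartets that are incompatible quartets of $T_1$ and $T_i$ for some $2 \le i \le t$, and let $\tilde x$ be an optimal solution of the linear program $$\text{minimize } \sum_{e \in E(T_1)} x_e \quad \text{s.t. } \sum_{e \in L(Q)} x_e \ge 1 \ \ \forall Q \in \mathcal{Q}, \qquad x_e \ge 0\ \ \forall e \in E(T_1).$$ Let $E \subseteq E(T_1)$ be the edge set produced by the following rounding procedure. Root $T_1$ at an arbitrary leaf $r$; for each edge $e$ let $u_e$ be its endpoint on the path from $r$ to the other endpoint $v_e$. Start with $E = \emptyset$. For the current $E$ and each edge $e$, let $D(e)$ be the set of edges $f$ such that $v_e$ lies on the path from $r$ to $v_f$ and the path from $v_e$ to $v_f$ contains no edge of $E$ (so $e \in D(e)$), and let $w(e) = \sum_{f \in D(e)} \tilde x_f$. While there exists an edge $e$ with $w(e) \ge 1/4$ and $w(f) < 1/4$ for all $f \in D(e) \setminus \{e\}$, add one such edge $e$ to $E$ (recomputing $D$ and $w$ afterwards); stop when every edge $e \in E(T_1) \setminus E$ has $w(e) < 1/4$. Then the final set satisfies $$|E| \le 4 \sum_{e \in E(T_1)} \tilde x_e.$$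
   Context: A (binary) phylogenetic tree on a finite set $X$ is an unrooted tree whose internal vertices have degree 3 and whose leaves are bijectively labelled by $X$. Two phylogenetic trees on $X$ are isomorphic ($\cong$) if there is a graph isomorphism between them fixing every leaf label. For $Y \subseteq X$, $T[Y]$ is the minimal subtree of $T$ connecting the leaves in $Y$, and $T|_Y$ is obtained from $T[Y]$ by suppressing all degree-2 vertices. A quartet is a 4-element subset of $X$; for $Q=\{a,b,c,d\}$, $ab|cd$ is the tree on $Q$ where $a,b$ share a neighbour $u$, $c,d$ share a neighbour $v$, and $u,v$ are adjacent. If $T_1|_Q \cong ab|cd$, $L(Q)$ is the set of edges of $T_1[\{a,b\}] \cup T_1[\{c,d\}]$. $Q$ is an incompatible quartet of $T_1,T_i$ if $T_1|_Q \not\cong T_i|_Q$. *)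

theory Defs
  imports Complex_Main
begin

record ('x, 'v) ptree =
  verts :: "'v set"
  edges :: "'v set set"
  lab   :: "'x \<Rightarrow> 'v"

definition is_path :: "'v set set \<Rightarrow> 'v list \<Rightarrow> 'v \<Rightarrow> 'v \<Rightarrow> bool" where
  "is_path E p u v \<longleftrightarrow> p \<noteq> [] \<and> hd p = u \<and> last p = v \<and> distinct p \<and>
     (\<forall>i. Suc i < length p \<longrightarrow> {p ! i, p ! Suc i} \<in> E)"

definition acyclic_graph :: "'v set set \<Rightarrow> bool" where
  "acyclic_graph E \<longleftrightarrow> \<not> (\<exists>p. 3 \<le> length p \<and> distinct p \<and>
     (\<forall>i. Suc i < length p \<longrightarrow> {p ! i, p ! Suc i} \<in> E) \<and> {last p, hd p} \<in> E)"

definition is_tree :: "'v set \<Rightarrow> 'v set set \<Rightarrow> bool" where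
  "is_tree V E \<longleftrightarrow> finite V \<and> V \<noteq> {} \<and>
     (\<forall>e\<in>E. \<exists>u v. e = {u, v} \<and> u \<noteq> v \<and> u \<in> V \<and> v \<in> V) \<and>
     (\<forall>u\<in>V. \<forall>v\<in>V. \<exists>p. is_path E p u v) \<and> acyclic_graph E"

definition deg :: "'v set set \<Rightarrow> 'v \<Rightarrow> nat" where
  "deg E v = card {e \<in> E. v \<in> e}"

text \<open>The (unique, in a tree) path between two vertices.\<close>
definition path_list :: "'v set set \<Rightarrow> 'v \<Rightarrow> 'v \<Rightarrow> 'v list" where
  "path_list E u v = (THE p. is_path E p u v)"

definition path_verts :: "'v set set \<Rightarrow> 'v \<Rightarrow> 'v \<Rightarrow> 'v set" where
  "path_verts E u v = set (path_list E u v)"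

definition path_edges :: "'v set set \<Rightarrow> 'v \<Rightarrow> 'v \<Rightarrow> 'v set set" where
  "path_edges E u v =
     {{path_list E u v ! i, path_list E u v ! Suc i} | i. Suc i < length (path_list E u v)}"

definition phylo_tree :: "'x set \<Rightarrow> ('x, 'v) ptree \<Rightarrow> bool" where
  "phylo_tree X T \<longleftrightarrow> is_tree (verts T) (edges T) \<and> inj_on (lab T) X \<and>
     lab T ` X \<subseteq> verts T \<and>
     (\<forall>x\<in>X. deg (edges T) (lab T x) \<le> 1) \<and>
     (\<forall>v \<in> verts T - lab T ` X. deg (edges T) v = 3)"

definition ptree_iso :: "'x set \<Rightarrow> ('x, 'v) ptree \<Rightarrow> ('x, 'w) ptree \<Rightarrow> bool" where
  "ptree_iso X T S \<longleftrightarrow> (\<exists>f. bij_betw f (verts T) (verts S) \<and>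
     (\<forall>u\<in>verts T. \<forall>v\<in>verts T. {u, v} \<in> edges T \<longleftrightarrow> {f u, f v} \<in> edges S) \<and>
     (\<forall>x\<in>X. f (lab T x) = lab S x))"

definition span_verts :: "('x, 'v) ptree \<Rightarrow> 'x set \<Rightarrow> 'v set" where
  "span_verts T Y = (\<Union>a\<in>Y. \<Union>b\<in>Y. path_verts (edges T) (lab T a) (lab T b))"

definition span_edges :: "('x, 'v) ptree \<Rightarrow> 'x set \<Rightarrow> 'v set set" where
  "span_edges T Y = (\<Union>a\<in>Y. \<Union>b\<in>Y. path_edges (edges T) (lab T a) (lab T b))"

text \<open>T|_Y: T[Y] with all degree-2 vertices suppressed.\<close>
definition restr :: "('x, 'v) ptree \<Rightarrow> 'x set \<Rightarrow> ('x, 'v) ptree" where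
  "restr T Y =
    (let W = {v \<in> span_verts T Y. deg (span_edges T Y) v \<noteq> 2} in
     \<lparr> verts = W,
       edges = {{u, w} | u w. u \<in> W \<and> w \<in> W \<and> u \<noteq> w \<and>
                  path_verts (edges T) u w \<inter> W = {u, w}},
       lab = lab T \<rparr>)"

definition qtree :: "'x \<Rightarrow> 'x \<Rightarrow> 'x \<Rightarrow> 'x \<Rightarrow> ('x, 'x + bool) ptree" where
  "qtree a b c d =
    \<lparr> verts = {Inl a, Inl b, Inl c, Inl d, Inr True, Inr False},
      edges = {{Inl a, Inr True}, {Inl b, Inr True}, {Inl c, Inr False},
               {Inl d, Inr False}, {Inr True, Inr False}},
      lab = Inl \<rparr>"

definition quartets :: "'x set \<Rightarrow> 'x set set" where
  "quartets X = {Q. Q \<subseteq> X \<and> card Q = 4}"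

definition Lq :: "('x, 'v) ptree \<Rightarrow> 'x set \<Rightarrow> 'v set set" where
  "Lq T Q = \<Union>{path_edges (edges T) (lab T a) (lab T b) \<union> path_edges (edges T) (lab T c) (lab T d)
                | a b c d. Q = {a, b, c, d} \<and> ptree_iso Q (restr T Q) (qtree a b c d)}"

definition incompatible_quartet :: "('x, 'v) ptree \<Rightarrow> ('x, 'v) ptree \<Rightarrow> 'x set \<Rightarrow> bool" where
  "incompatible_quartet T1 T2 Q \<longleftrightarrow> \<not> ptree_iso Q (restr T1 Q) (restr T2 Q)"

definition lp_feasible :: "('x, 'v) ptree \<Rightarrow> 'x set set \<Rightarrow> ('v set \<Rightarrow> real) \<Rightarrow> bool" where
  "lp_feasible T Qs x \<longleftrightarrow> (\<forall>e\<in>edges T. x e \<ge> 0) \<and> (\<forall>Q\<in>Qs. (\<Sum>e\<in>Lq T Q. x e) \<ge> 1)"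

definition lp_optimal :: "('x, 'v) ptree \<Rightarrow> 'x set set \<Rightarrow> ('v set \<Rightarrow> real) \<Rightarrow> bool" where
  "lp_optimal T Qs x \<longleftrightarrow> lp_feasible T Qs x \<and>
     (\<forall>y. lp_feasible T Qs y \<longrightarrow> (\<Sum>e\<in>edges T. x e) \<le> (\<Sum>e\<in>edges T. y e))"

definition lower_end :: "('x, 'v) ptree \<Rightarrow> 'v \<Rightarrow> 'v set \<Rightarrow> 'v" where
  "lower_end T r e = (THE v. v \<in> e \<and> (\<exists>u\<in>e. u \<noteq> v \<and> u \<in> path_verts (edges T) r v))"

definition Dset :: "('x, 'v) ptree \<Rightarrow> 'v \<Rightarrow> 'v set set \<Rightarrow> 'v set \<Rightarrow> 'v set set" where
  "Dset T r E e = {f \<in> edges T.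
      lower_end T r e \<in> path_verts (edges T) r (lower_end T r f) \<and>
      path_edges (edges T) (lower_end T r e) (lower_end T r f) \<inter> E = {}}"

definition wt :: "('x, 'v) ptree \<Rightarrow> 'v \<Rightarrow> ('v set \<Rightarrow> real) \<Rightarrow> 'v set set \<Rightarrow> 'v set \<Rightarrow> real" where
  "wt T r x E e = (\<Sum>f\<in>Dset T r E e. x f)"

text \<open>Sets of edges reachable by running the (nondeterministic) while loop.\<close>
inductive rounding_reach :: "('x, 'v) ptree \<Rightarrow> 'v \<Rightarrow> ('v set \<Rightarrow> real) \<Rightarrow> 'v set set \<Rightarrow> bool"
  for T r x where
  start: "rounding_reach T r x {}"
| step: "\<lbrakk> rounding_reach T r x E; e \<in> edges T; e \<notin> E; wt T r x E e \<ge> 1/4;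
           \<forall>f \<in> Dset T r E e - {e}. wt T r x E f < 1/4 \<rbrakk>
         \<Longrightarrow> rounding_reach T r x (insert e E)"

definition rounding_final :: "('x, 'v) ptree \<Rightarrow> 'v \<Rightarrow> ('v set \<Rightarrow> real) \<Rightarrow> 'v set set \<Rightarrow> bool" where
  "rounding_final T r x E \<longleftrightarrow> rounding_reach T r x E \<and>
     (\<forall>e \<in> edges T - E. wt T r x E e < 1/4)"

end

theory Submission
  imports Defs
begin



fun cp :: "'v list \<Rightarrow> 'v set set" where
  "cp (a # b # xs) = insert {a, b} (cp (b # xs))"
| "cp _ = {}"

lemma cp_nth: "cp p = {{p ! i, p ! Suc i} | i. Suc i < length p}"
proof (induction p rule: cp.induct)
  case (1 a b xs)
  show ?case
  proof (rule set_eqI, rule iffI)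
    fix z assume "z \<in> cp (a#b#xs)"
    then consider "z = {a,b}" | "z \<in> cp (b#xs)" by auto
    then show "z \<in> {{(a#b#xs) ! i, (a#b#xs) ! Suc i} | i. Suc i < length (a#b#xs)}"
    proof cases
      case 1 then show ?thesis by force
    next
      case 2 then obtain i where "z = {(b#xs)!i, (b#xs)!Suc i}" "Suc i < length (b#xs)"
        using "1.IH" by auto
      then show ?thesis by (auto intro!: exI[of _ "Suc i"])
    qed
  next
    fix z assume "z \<in> {{(a#b#xs) ! i, (a#b#xs) ! Suc i} | i. Suc i < length (a#b#xs)}"
    then obtain i where i: "z = {(a#b#xs) ! i, (a#b#xs) ! Suc i}" "Suc i < length (a#b#xs)" by auto
    show "z \<in> cp (a#b#xs)"
    proof (cases i)
      case 0 then show ?thesis using i by simp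
    next
      case (Suc j) then show ?thesis using i "1.IH" by auto
    qed
  qed
qed auto

lemma cp_Cons: "cp (a # xs) = (if xs = [] then {} else insert {a, hd xs} (cp xs))"
  by (cases xs) auto

lemma cp_append: "cp (xs @ ys) = cp xs \<union> cp ys \<union> (if xs \<noteq> [] \<and> ys \<noteq> [] then {{last xs, hd ys}} else {})"
proof (induction xs)
  case Nil then show ?case by simp
next
  case (Cons a xs) then show ?case by (cases xs; cases ys; auto)
qed

lemma cp_rev: "cp (rev xs) = cp xs"
proof (induction xs)
  case Nil then show ?case by simp
next
  case (Cons a xs)
  show ?case
  proof (cases xs)
    case Nil then show ?thesis by simp
  next
    case (Cons b ys)
    have "cp (rev (a # xs)) = cp (rev xs) \<union> {{hd xs, a}}"
      using cp_append[of "rev xs" "[a]"] Cons by (simp add: last_rev)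
    also have "\<dots> = cp (a # xs)" using Cons.IH Cons by (simp add: insert_commute)
    finally show ?thesis .
  qed
qed

lemma cp_take: "cp (take n xs) \<subseteq> cp xs"
proof -
  have "cp (take n xs @ drop n xs) = cp xs" by simp
  then show ?thesis using cp_append[of "take n xs" "drop n xs"] by blast
qed

lemma cp_drop: "cp (drop n xs) \<subseteq> cp xs"
proof -
  have "cp (take n xs @ drop n xs) = cp xs" by simp
  then show ?thesis using cp_append[of "take n xs" "drop n xs"] by blast
qed

lemma is_path_cp: "is_path E p u v \<longleftrightarrow> p \<noteq> [] \<and> hd p = u \<and> last p = v \<and> distinct p \<and> cp p \<subseteq> E"
  unfolding is_path_def cp_nth by blast

lemma acyclic_cp: "acyclic_graph E \<longleftrightarrow> \<not> (\<exists>c. 3 \<le> length c \<and> distinct c \<and> cp c \<subseteq> E \<and> {last c, hd c} \<in> E)"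
  unfolding acyclic_graph_def cp_nth by blast

lemma path_edges_cp: "path_edges E u v = cp (path_list E u v)"
  unfolding path_edges_def cp_nth by blast

lemma cycle:
  assumes "distinct (u # p')" "distinct (u # q')" "p' \<noteq> []" "q' \<noteq> []" "hd p' \<noteq> hd q'"
    "last p' = last q'" "cp (u # p') \<subseteq> E" "cp (u # q') \<subseteq> E"
  shows "\<not> acyclic_graph E"
proof -
  have "\<exists>y \<in> set p'. y \<in> set q'" using assms(3,4,6) by (metis last_in_set)
  then obtain xs y ys where p': "p' = xs @ y # ys" "y \<in> set q'" "\<forall>z\<in>set xs. z \<notin> set q'"
    using split_list_first_prop[of p' "\<lambda>z. z \<in> set q'"] by blast
  obtain zs1 zs2 where q': "q' = zs1 @ y # zs2" using p'(2) split_list by metis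
  define c where "c = (u # xs) @ rev (zs1 @ [y])"
  have "distinct c" using assms(1,2) p' q' unfolding c_def by auto
  moreover have "3 \<le> length c"
  proof -
    have "xs \<noteq> [] \<or> zs1 \<noteq> []" using assms(5) p' q' by auto
    then show ?thesis unfolding c_def by (auto simp: Suc_le_eq)
  qed
  moreover have "cp c \<subseteq> E"
  proof -
    have a: "cp (u # xs @ [y]) \<subseteq> E"
      using assms(7) p' cp_append[of "u # xs @ [y]" ys] by auto
    have b: "cp (zs1 @ [y]) \<subseteq> E"
      using assms(8) q' cp_append[of "u # zs1 @ [y]" zs2] cp_append[of "[u]" "zs1 @ [y]"] by auto
    have "cp c = cp (u # xs @ [y]) \<union> cp (rev (zs1 @ [y]))"
      unfolding c_def using cp_append[of "u#xs" "[y]"] cp_append[of "u#xs" "rev (zs1 @ [y])"]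
      by auto
    then show ?thesis using a b cp_rev[of "zs1 @ [y]"] by auto
  qed
  moreover have "{last c, hd c} \<in> E"
  proof (cases zs1)
    case Nil
    then have "{u, y} \<in> cp (u # q')" using q' by simp
    then show ?thesis using assms(8) Nil unfolding c_def by (auto simp: insert_commute)
  next
    case (Cons z zs)
    then have "{u, z} \<in> cp (u # q')" using q' by simp
    moreover have "last c = z" unfolding c_def using Cons by simp
    ultimately show ?thesis using assms(8) unfolding c_def by (auto simp: insert_commute)
  qed
  ultimately show ?thesis unfolding acyclic_cp by blast
qed

lemma path_unique:
  assumes "acyclic_graph E" "is_path E p u v" "is_path E q u v"
  shows "p = q"
  using assms(2,3)
proof (induction p arbitrary: u q)
  case Nil then show ?case by (simp add: is_path_def)
next
  case (Cons a p')
  from Cons.prems have au: "a = u" by (simp add: is_path_def)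
  obtain q' where q: "q = u # q'" using Cons.prems unfolding is_path_def by (cases q) auto
  show ?case
  proof (cases "p' = []")
    case True
    then have "u = v" using Cons.prems au by (simp add: is_path_def)
    then have "q' = []" using Cons.prems(2) q unfolding is_path_def
      by (metis distinct.simps(2) last.simps last_in_set)
    then show ?thesis using True au q by simp
  next
    case pne: False
    show ?thesis
    proof (cases "q' = []")
      case True
      then have "u = v" using Cons.prems q by (simp add: is_path_def)
      then have False using Cons.prems(1) au pne unfolding is_path_def
        by (metis distinct.simps(2) last.simps last_in_set)
      then show ?thesis ..
    next
      case qne: False
      show ?thesis
      proof (cases "hd p' = hd q'")
        case True
        have "is_path E p' (hd p') v" using Cons.prems(1) pne au
          unfolding is_path_cp by (cases p' rule: list.exhaust) auto
        moreover have "is_path E q' (hd p') v" using Cons.prems(2) qne q True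
          unfolding is_path_cp by (cases q' rule: list.exhaust) auto
        ultimately have "p' = q'" using Cons.IH by blast
        then show ?thesis using au q by simp
      next
        case False
        have "\<not> acyclic_graph E"
          apply (rule cycle[of u p' q' E])
          using Cons.prems au q pne qne False unfolding is_path_cp by auto
        then show ?thesis using assms(1) by blast
      qed
    qed
  qed
qed




lemma path_list_eq: "acyclic_graph E \<Longrightarrow> is_path E p u v \<Longrightarrow> path_list E u v = p"
  unfolding path_list_def using path_unique by (metis (mono_tags) the_equality)

lemma path_take:
  assumes "is_path E p r w" "i < length p"
  shows "is_path E (take (Suc i) p) r (p ! i)"
proof -
  have h: "Suc i = length p \<Longrightarrow> p ! (length p - 1) = p ! i" by (metis diff_Suc_1)
  show ?thesis using h assms cp_take[of "Suc i" p] unfolding is_path_cp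
    by (auto simp: hd_take last_conv_nth distinct_take min_def)
qed

lemma path_drop:
  assumes "is_path E p r w" "i < length p"
  shows "is_path E (drop i p) (p ! i) w"
  using assms cp_drop[of i p] unfolding is_path_cp
  by (auto simp: hd_drop_conv_nth distinct_drop last_drop)

lemma excl:
  assumes "acyclic_graph E" "is_path E p r v" "z \<in> set p" "z \<noteq> v"
  shows "v \<notin> set (path_list E r z)"
proof
  assume v: "v \<in> set (path_list E r z)"
  obtain k where k: "k < length p" "p ! k = z" using assms(3) by (meson in_set_conv_nth)
  have "path_list E r z = take (Suc k) p"
    using path_list_eq[OF assms(1) path_take[OF assms(2) k(1)]] k by simp
  then obtain j where j: "j < Suc k" "j < length p" "p ! j = v" using v
    by (auto simp: in_set_conv_nth)
  have "v = p ! (length p - 1)" using assms(2) unfolding is_path_def by (metis last_conv_nth)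
  then have jj: "j = length p - 1" using j assms(2) unfolding is_path_def
    by (metis diff_less length_greater_0_conv nth_eq_iff_index_eq zero_less_one)
  then have "k = length p - 1" using j k by simp
  then show False using j k jj assms(4) by simp
qed

lemma path_snoc:
  assumes "is_path E p r b" "a \<notin> set p" "{b, a} \<in> E"
  shows "is_path E (p @ [a]) r a"
proof -
  have "cp (p @ [a]) = cp p \<union> {{b, a}}" using assms(1) cp_append[of p "[a]"] unfolding is_path_def by simp
  then show ?thesis using assms unfolding is_path_cp by simp
qed

lemma doubleton_eq: "u \<in> {a, b} \<Longrightarrow> v \<in> {a, b} \<Longrightarrow> u \<noteq> v \<Longrightarrow> {u, v} = {a, b}"
  by auto

locale tctx =
  fixes T :: "('x, 'v) ptree" and r :: 'v
  assumes tree: "is_tree (verts T) (edges T)" and rV: "r \<in> verts T"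
begin

lemma acyc: "acyclic_graph (edges T)" using tree unfolding is_tree_def by blast

lemma PL: "u \<in> verts T \<Longrightarrow> v \<in> verts T \<Longrightarrow> is_path (edges T) (path_list (edges T) u v) u v"
  using tree path_list_eq[OF acyc] unfolding is_tree_def by metis

lemma edgeE: "e \<in> edges T \<Longrightarrow> \<exists>a b. e = {a, b} \<and> a \<noteq> b \<and> a \<in> verts T \<and> b \<in> verts T"
  using tree unfolding is_tree_def by blast

lemma finE: "finite (edges T)"
proof -
  have "edges T \<subseteq> Pow (verts T)" using edgeE by blast
  moreover have "finite (verts T)" using tree unfolding is_tree_def by blast
  ultimately show ?thesis by (meson finite_Pow_iff finite_subset)
qed

lemma LE:
  assumes "e \<in> edges T"
  shows "\<exists>u. e = {u, lower_end T r e} \<and> u \<noteq> lower_end T r e \<and> lower_end T r e \<in> verts T \<and>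
           path_list (edges T) r (lower_end T r e) = path_list (edges T) r u @ [lower_end T r e]"
proof -
  obtain a b where ab: "e = {a, b}" "a \<noteq> b" "a \<in> verts T" "b \<in> verts T" using edgeE assms by blast
  let ?P = "\<lambda>v. v \<in> e \<and> (\<exists>u\<in>e. u \<noteq> v \<and> u \<in> path_verts (edges T) r v)"
  have key: "\<And>a b. e = {a,b} \<Longrightarrow> a \<noteq> b \<Longrightarrow> a \<in> verts T \<Longrightarrow> b \<in> verts T \<Longrightarrow> a \<in> set (path_list (edges T) r b) \<Longrightarrow>
      ?P b \<and> (\<forall>v. ?P v \<longrightarrow> v = b)"
  proof -
    fix a b assume h: "e = {a,b}" "a \<noteq> b" "a \<in> verts T" "b \<in> verts T" "a \<in> set (path_list (edges T) r b)"
    have "b \<notin> set (path_list (edges T) r a)"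
      using excl[OF acyc PL[OF rV h(4)] h(5) h(2)] .
    then have nb: "b \<notin> path_verts (edges T) r a" unfolding path_verts_def .
    have bb: "b \<in> e" "a \<in> e" using h(1) by simp_all
    have 1: "?P b"
      using bb h(2,5) unfolding path_verts_def by (intro conjI bexI[of _ a]) simp_all
    have 2: "v = b" if pv: "?P v" for v
    proof (rule ccontr)
      assume "v \<noteq> b"
      moreover have "v \<in> {a, b}" using pv h(1) by simp
      ultimately have va: "v = a" by simp
      obtain u where "u \<in> e" "u \<noteq> v" "u \<in> path_verts (edges T) r v" using pv by blast
      then have "u = b" using va h(1) by simp
      then show False using nb va \<open>u \<in> path_verts (edges T) r v\<close> by simp
    qed
    show "?P b \<and> (\<forall>v. ?P v \<longrightarrow> v = b)" using 1 2 by blast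
  qed
  have "\<exists>v. ?P v \<and> (\<forall>v'. ?P v' \<longrightarrow> v' = v)"
  proof (cases "a \<in> set (path_list (edges T) r b)")
    case True
    from key[OF ab True] show ?thesis by (rule exI)
  next
    case False
    have pb: "is_path (edges T) (path_list (edges T) r b) r b" by (rule PL[OF rV ab(4)])
    have "is_path (edges T) (path_list (edges T) r b @ [a]) r a"
      using path_snoc[OF pb False] ab assms by (simp add: insert_commute)
    then have "path_list (edges T) r a = path_list (edges T) r b @ [a]" by (rule path_list_eq[OF acyc])
    moreover have "b \<in> set (path_list (edges T) r b)" using pb unfolding is_path_def by (metis last_in_set)
    ultimately have ba: "b \<in> set (path_list (edges T) r a)" by simp
    have eba: "e = {b, a}" using ab by (simp add: insert_commute)
    have "b \<noteq> a" using ab(2) by simp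
    from key[OF eba this ab(4) ab(3) ba] show ?thesis by (rule exI)
  qed
  then obtain v where v: "?P v" "\<forall>v'. ?P v' \<longrightarrow> v' = v" by blast
  have lv: "lower_end T r e = v" unfolding lower_end_def using v by (intro the_equality) blast+
  obtain u where u: "u \<in> e" "u \<noteq> v" "u \<in> set (path_list (edges T) r v)" using v(1) unfolding path_verts_def by blast
  have eq: "e = {u, v}" using doubleton_eq[of u a b v] u(1,2) v(1) ab(1) by simp
  have vV: "v \<in> verts T" "u \<in> verts T" using u(1) v(1) ab by blast+
  have nv: "v \<notin> set (path_list (edges T) r u)" using excl[OF acyc PL[OF rV vV(1)] u(3) u(2)] .
  have pu: "is_path (edges T) (path_list (edges T) r u) r u" by (rule PL[OF rV vV(2)])
  have "is_path (edges T) (path_list (edges T) r u @ [v]) r v"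
    using path_snoc[OF pu nv] assms eq by simp
  then have pl: "path_list (edges T) r v = path_list (edges T) r u @ [v]" by (rule path_list_eq[OF acyc])
  have "e = {u, v} \<and> u \<noteq> v \<and> v \<in> verts T \<and> path_list (edges T) r v = path_list (edges T) r u @ [v]"
    using eq u(2) vV(1) pl by blast
  then show ?thesis unfolding lv by (rule exI)
qed

end



context tctx begin

lemma Dmono: "E1 \<subseteq> E \<Longrightarrow> Dset T r E g \<subseteq> Dset T r E1 g"
  unfolding Dset_def by blast

lemma Dsub: "Dset T r E g \<subseteq> edges T"
  unfolding Dset_def by blast

lemma finD: "finite (Dset T r E g)"
  using finite_subset[OF Dsub finE] .

lemma wt_mono:
  assumes x0: "\<forall>e\<in>edges T. x e \<ge> 0" and "E1 \<subseteq> E"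
  shows "wt T r x E g \<le> wt T r x E1 g"
  unfolding wt_def
  by (rule sum_mono2[OF finD Dmono[OF assms(2)]]) (use x0 Dsub in blast)

lemma core:
  assumes x0: "\<forall>e\<in>edges T. x e \<ge> 0" and E1E: "E1 \<subseteq> E" and eE: "e \<in> E" and e'E: "e' \<notin> E"
    and eT: "e \<in> edges T" and e'T: "e' \<in> edges T"
    and hyp: "\<forall>g\<in>Dset T r E1 e - {e}. wt T r x E1 g < 1/4"
    and big: "wt T r x E e' \<ge> 1/4"
  shows "Dset T r E1 e \<inter> Dset T r E e' = {}"
proof (rule ccontr)
  assume "Dset T r E1 e \<inter> Dset T r E e' \<noteq> {}"
  then obtain f where f1: "f \<in> Dset T r E1 e" and f2: "f \<in> Dset T r E e'" by blast
  define v where "v = lower_end T r e"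
  define v' where "v' = lower_end T r e'"
  define w where "w = lower_end T r f"
  define P where "P = path_list (edges T)"
  have fT: "f \<in> edges T" using f1 unfolding Dset_def by blast
  have vin: "v \<in> set (P r w)" and cpv: "cp (P v w) \<inter> E1 = {}"
    using f1 unfolding Dset_def v_def w_def P_def path_verts_def path_edges_cp by blast+
  have v'in: "v' \<in> set (P r w)" and cpv': "cp (P v' w) \<inter> E = {}"
    using f2 unfolding Dset_def v'_def w_def P_def path_verts_def path_edges_cp by blast+
  have wV: "w \<in> verts T" using LE[OF fT] unfolding w_def by blast
  define pw where "pw = P r w"
  have pw: "is_path (edges T) pw r w" unfolding pw_def P_def by (rule PL[OF rV wV])
  obtain i where i: "i < length pw" "pw ! i = v" using vin unfolding pw_def by (meson in_set_conv_nth)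
  obtain i' where i': "i' < length pw" "pw ! i' = v'" using v'in unfolding pw_def by (meson in_set_conv_nth)
  have Pvw: "P v w = drop i pw"
    unfolding P_def using path_list_eq[OF acyc path_drop[OF pw i(1)]] i(2) by simp
  have Pv'w: "P v' w = drop i' pw"
    unfolding P_def using path_list_eq[OF acyc path_drop[OF pw i'(1)]] i'(2) by simp
  show False
  proof (cases "i \<le> i'")
    case True
    have tk: "is_path (edges T) (take (Suc i') pw) r v'" using path_take[OF pw i'(1)] i'(2) by simp
    have Prv': "P r v' = take (Suc i') pw" unfolding P_def by (rule path_list_eq[OF acyc tk])
    have lt: "i < length (take (Suc i') pw)" using True i'(1) by simp
    have tki: "take (Suc i') pw ! i = v" using True i(2) by simp
    have vin': "v \<in> set (P r v')" using nth_mem[OF lt] tki Prv' by simp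
    have "is_path (edges T) (drop i (take (Suc i') pw)) v v'"
      using path_drop[OF tk lt] tki by simp
    then have Pvv': "P v v' = drop i (take (Suc i') pw)" unfolding P_def by (rule path_list_eq[OF acyc])
    have "cp (P v v') \<subseteq> cp (P v w)"
      unfolding Pvv' Pvw drop_take by (rule cp_take)
    then have "path_edges (edges T) v v' \<inter> E1 = {}" using cpv unfolding path_edges_cp P_def by blast
    then have "e' \<in> Dset T r E1 e"
      unfolding Dset_def using e'T vin' unfolding v_def v'_def P_def path_verts_def by blast
    moreover have "e' \<noteq> e" using eE e'E by blast
    ultimately have "wt T r x E1 e' < 1/4" using hyp by blast
    moreover have "wt T r x E e' \<le> wt T r x E1 e'" by (rule wt_mono[OF x0 E1E])
    ultimately show False using big by simp
  next
    case False
    have "\<exists>u. e = {u, v} \<and> u \<noteq> v \<and> v \<in> verts T \<and> P r v = P r u @ [v]"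
      using LE[OF eT] unfolding v_def P_def .
    then obtain u where u: "e = {u, v}" "u \<noteq> v" "P r v = P r u @ [v]" by blast
    have ue: "u \<in> e" using u(1) by simp
    obtain a b where ab: "e = {a, b}" "a \<in> verts T" "b \<in> verts T" using edgeE[OF eT] by blast
    have uV: "u \<in> verts T" using ue ab by auto
    have pu: "is_path (edges T) (P r u) r u" unfolding P_def by (rule PL[OF rV uV])
    have tk: "is_path (edges T) (take (Suc i) pw) r v" using path_take[OF pw i(1)] i(2) by simp
    have Prv: "P r v = take (Suc i) pw" unfolding P_def by (rule path_list_eq[OF acyc tk])
    have len: "length (P r u) = i" using arg_cong[OF u(3), of length] Prv i(1) by simp
    have ne: "P r u \<noteq> []" using pu unfolding is_path_def by blast
    then have i1: "i \<ge> 1" using len by (cases "P r u") auto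
    have "last (P r u) = u" using pu unfolding is_path_def by blast
    then have pri: "(P r u) ! (i - 1) = u" using ne len by (metis last_conv_nth)
    have "(P r u @ [v]) ! (i - 1) = (P r u) ! (i - 1)" using len i1 by (simp add: nth_append)
    then have "(take (Suc i) pw) ! (i - 1) = u" using u(3) Prv pri by simp
    then have pu1: "pw ! (i - 1) = u" using i1 by simp
    define j where "j = i - 1 - i'"
    have j1: "drop i' pw ! j = u" using pu1 False i(1) unfolding j_def by simp
    have j2: "drop i' pw ! Suc j = v" using i(2) False i(1) unfolding j_def
      by (simp add: Suc_diff_Suc)
    have j3: "Suc j < length (drop i' pw)" using False i(1) unfolding j_def by simp
    have "{drop i' pw ! j, drop i' pw ! Suc j} \<in> cp (drop i' pw)" unfolding cp_nth using j3 by blast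
    then have "e \<in> cp (drop i' pw)" using j1 j2 u(1) by simp
    then have "e \<in> cp (P v' w)" using Pv'w by simp
    then show False using cpv' eE by blast
  qed
qed

end



context tctx begin

definition good :: "('v set \<Rightarrow> real) \<Rightarrow> 'v set set \<Rightarrow> ('v set \<Rightarrow> 'v set set) \<Rightarrow> bool" where
  "good x E A \<longleftrightarrow> (\<forall>e\<in>E. \<exists>E1. E1 \<subseteq> E \<and> e \<notin> E1 \<and> A e = Dset T r E1 e \<and>
       (\<forall>g\<in>Dset T r E1 e - {e}. wt T r x E1 g < 1/4) \<and> wt T r x E1 e \<ge> 1/4) \<and>
     (\<forall>e\<in>E. \<forall>e'\<in>E. e \<noteq> e' \<longrightarrow> A e \<inter> A e' = {})"

lemma inv:
  assumes x0: "\<forall>e\<in>edges T. x e \<ge> 0" and R: "rounding_reach T r x E"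
  shows "finite E \<and> E \<subseteq> edges T \<and> (\<exists>A. good x E A)"
  using R
proof (induction rule: rounding_reach.induct)
  case start
  then show ?case unfolding good_def by simp
next
  case (step E e)
  from step.IH obtain A where A: "good x E A" and finE0: "finite E" and subE: "E \<subseteq> edges T" by blast
  have eT: "e \<in> edges T" and eE: "e \<notin> E" and big: "wt T r x E e \<ge> 1/4"
    and hyp: "\<forall>f\<in>Dset T r E e - {e}. wt T r x E f < 1/4" using step.hyps by auto
  have A1: "\<exists>E1. E1 \<subseteq> E \<and> e0 \<notin> E1 \<and> A e0 = Dset T r E1 e0 \<and>
       (\<forall>g\<in>Dset T r E1 e0 - {e0}. wt T r x E1 g < 1/4) \<and> wt T r x E1 e0 \<ge> 1/4" if "e0 \<in> E" for e0
    using A that unfolding good_def by blast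
  have A2: "A e0 \<inter> A e1 = {}" if "e0 \<in> E" "e1 \<in> E" "e0 \<noteq> e1" for e0 e1
    using A that unfolding good_def by blast
  define A' where "A' = A(e := Dset T r E e)"
  have 1: "\<exists>E1. E1 \<subseteq> insert e E \<and> e0 \<notin> E1 \<and> A' e0 = Dset T r E1 e0 \<and>
       (\<forall>g\<in>Dset T r E1 e0 - {e0}. wt T r x E1 g < 1/4) \<and> wt T r x E1 e0 \<ge> 1/4"
    if e0: "e0 \<in> insert e E" for e0
  proof (cases "e0 = e")
    case True
    have "E \<subseteq> insert e E \<and> e0 \<notin> E \<and> A' e0 = Dset T r E e0 \<and>
       (\<forall>g\<in>Dset T r E e0 - {e0}. wt T r x E g < 1/4) \<and> wt T r x E e0 \<ge> 1/4"
      using True eE hyp big subset_insertI[of E e] unfolding A'_def by (intro conjI) simp_all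
    then show ?thesis by (rule exI)
  next
    case False
    then have "e0 \<in> E" using e0 by simp
    from A1[OF this] obtain E1 where h: "E1 \<subseteq> E" "e0 \<notin> E1" "A e0 = Dset T r E1 e0"
       "\<forall>g\<in>Dset T r E1 e0 - {e0}. wt T r x E1 g < 1/4" "wt T r x E1 e0 \<ge> 1/4"
      by blast
    have "E1 \<subseteq> insert e E \<and> e0 \<notin> E1 \<and> A' e0 = Dset T r E1 e0 \<and>
       (\<forall>g\<in>Dset T r E1 e0 - {e0}. wt T r x E1 g < 1/4) \<and> wt T r x E1 e0 \<ge> 1/4"
      using h False unfolding A'_def by auto
    then show ?thesis by (rule exI)
  qed
  have ee: "A e0 \<inter> Dset T r E e = {}" if e0: "e0 \<in> E" for e0
  proof -
    obtain E1 where h: "E1 \<subseteq> E" "A e0 = Dset T r E1 e0" "\<forall>g\<in>Dset T r E1 e0 - {e0}. wt T r x E1 g < 1/4"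
      using A1[OF e0] by blast
    have e0T: "e0 \<in> edges T" using subE e0 by blast
    have "Dset T r E1 e0 \<inter> Dset T r E e = {}"
      by (rule core[OF x0 h(1) e0 eE e0T eT h(3) big])
    then show ?thesis using h(2) by simp
  qed
  have 2: "A' e0 \<inter> A' e1 = {}" if "e0 \<in> insert e E" "e1 \<in> insert e E" "e0 \<noteq> e1" for e0 e1
  proof (cases "e0 = e")
    case True
    then have "e1 \<in> E" "e1 \<noteq> e" using that by auto
    then show ?thesis using ee[of e1] True unfolding A'_def by auto
  next
    case F: False
    show ?thesis
    proof (cases "e1 = e")
      case True
      then have "e0 \<in> E" using that F by auto
      then show ?thesis using ee[of e0] True F unfolding A'_def by auto
    next
      case False
      then have "e0 \<in> E" "e1 \<in> E" using that F by auto
      then have "A e0 \<inter> A e1 = {}" using A2 that(3) by blast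
      then show ?thesis using F False unfolding A'_def by simp
    qed
  qed
  have "good x (insert e E) A'" unfolding good_def
  proof (intro conjI ballI impI)
    fix e0 assume "e0 \<in> insert e E" then show "\<exists>E1. E1 \<subseteq> insert e E \<and> e0 \<notin> E1 \<and> A' e0 = Dset T r E1 e0 \<and>
       (\<forall>g\<in>Dset T r E1 e0 - {e0}. wt T r x E1 g < 1/4) \<and> wt T r x E1 e0 \<ge> 1/4" by (rule 1)
  next
    fix e0 e1 assume "e0 \<in> insert e E" "e1 \<in> insert e E" "e0 \<noteq> e1"
    then show "A' e0 \<inter> A' e1 = {}" by (rule 2)
  qed
  moreover have "finite (insert e E)" using finE0 by simp
  moreover have "insert e E \<subseteq> edges T" using subE eT by simp
  ultimately show ?case by blast
qed

lemma bound:
  assumes x0: "\<forall>e\<in>edges T. x e \<ge> 0" and R: "rounding_reach T r x E"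
  shows "real (card E) \<le> 4 * (\<Sum>e\<in>edges T. x e)"
proof -
  have I: "finite E \<and> E \<subseteq> edges T \<and> (\<exists>A. good x E A)" by (rule inv[OF x0 R])
  then have fin: "finite E" and sub: "E \<subseteq> edges T" by auto
  from I obtain A where A: "good x E A" by blast
  have AD: "\<exists>E1. A e = Dset T r E1 e \<and> wt T r x E1 e \<ge> 1/4" if "e \<in> E" for e
  proof -
    have "\<forall>e\<in>E. \<exists>E1. E1 \<subseteq> E \<and> e \<notin> E1 \<and> A e = Dset T r E1 e \<and>
       (\<forall>g\<in>Dset T r E1 e - {e}. wt T r x E1 g < 1/4) \<and> wt T r x E1 e \<ge> 1/4"
      using A unfolding good_def by (rule conjunct1)
    from bspec[OF this that] obtain E1 where "A e = Dset T r E1 e" "wt T r x E1 e \<ge> 1/4" by blast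
    then show ?thesis by blast
  qed
  have dis: "\<forall>e\<in>E. \<forall>e'\<in>E. e \<noteq> e' \<longrightarrow> A e \<inter> A e' = {}"
    using A unfolding good_def by (rule conjunct2)
  have Asub: "A e \<subseteq> edges T" if eE: "e \<in> E" for e
  proof -
    obtain E1 where "A e = Dset T r E1 e" using AD[OF eE] by blast
    then show ?thesis using Dsub by simp
  qed
  have Afin: "finite (A e)" if "e \<in> E" for e
    using finite_subset[OF Asub[OF that] finE] .
  have Aw: "(\<Sum>f\<in>A e. x f) \<ge> 1/4" if eE: "e \<in> E" for e
  proof -
    obtain E1 where "A e = Dset T r E1 e" "wt T r x E1 e \<ge> 1/4" using AD[OF eE] by blast
    then show ?thesis unfolding wt_def by simp
  qed
  have "real (card E) * (1/4) = (\<Sum>e\<in>E. (1/4::real))" by simp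
  also have "\<dots> \<le> (\<Sum>e\<in>E. \<Sum>f\<in>A e. x f)" by (rule sum_mono) (rule Aw)
  also have "\<dots> = (\<Sum>f\<in>\<Union>(A ` E). x f)"
    by (rule sum.UNION_disjoint[symmetric, OF fin]) (use Afin dis in auto)
  also have "\<dots> \<le> (\<Sum>f\<in>edges T. x f)"
  proof (rule sum_mono2[OF finE])
    show "\<Union>(A ` E) \<subseteq> edges T" using Asub by blast
    show "\<And>b. b \<in> edges T - \<Union>(A ` E) \<Longrightarrow> 0 \<le> x b" using x0 by blast
  qed
  finally show ?thesis by simp
qed

end



theorem lemma4:
  fixes X :: "'x set" and T :: "nat \<Rightarrow> ('x, 'v) ptree" and t :: nat
    and x :: "'v set \<Rightarrow> real" and \<rho> :: 'x and E :: "'v set set"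
  assumes t1: "1 \<le> t"
    and trees: "\<forall>i\<in>{1..t}. phylo_tree X (T i)"
    and Qs: "Qs = {Q \<in> quartets X. \<exists>i\<in>{2..t}. incompatible_quartet (T 1) (T i) Q}"
    and opt: "lp_optimal (T 1) Qs x"
    and root: "\<rho> \<in> X"
    and final: "rounding_final (T 1) (lab (T 1) \<rho>) x E"
  shows "real (card E) \<le> 4 * (\<Sum>e\<in>edges (T 1). x e)"
proof -
  have t1': "1 \<in> {1..t}" using t1 by simp
  have ph: "phylo_tree X (T 1)" using trees t1' by blast
  have tr: "is_tree (verts (T 1)) (edges (T 1))" using ph unfolding phylo_tree_def by blast
  have rV: "lab (T 1) \<rho> \<in> verts (T 1)" using ph root unfolding phylo_tree_def by blast
  interpret tctx "T 1" "lab (T 1) \<rho>" using tr rV by unfold_locales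
  have x0: "\<forall>e\<in>edges (T 1). x e \<ge> 0" using opt unfolding lp_optimal_def lp_feasible_def by blast
  have R: "rounding_reach (T 1) (lab (T 1) \<rho>) x E" using final unfolding rounding_final_def by blast
  show ?thesis by (rule bound[OF x0 R])
qed

end
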